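(* Let $\mathcal{A}=\langle\Sigma,Q,Q_0,\delta,\alpha\rangle$ be a GFG automaton and let $g=\langle\Sigma,Q,M,m_0,\rho,\tau\rangle$ be a finite-state strategy (transducer) witnessing its GFGness. Then: (1) for every state $q\in Q$ and every memory $m\in M$ of $q$ (i.e. $\tau(m)=q$) that is reachable in $\mathcal{A}_g$, we have $L(\mathcal{A}_g^m)=L(\mathcal{A}^q)$; (2) for all memories $m,m'\in M$ that are reachable in $\mathcal{A}_g$ with $\tau(m)=\tau(m')$, we have $L(\mathcal{A}_g^m)=L(\mathcal{A}_g^{m'})$.
   Context: An automaton is $\mathcal{A}=\langle\Sigma,Q,Q_0,\delta,\alpha\rangle$ with finite alphabet $\Sigma$, finite state set $Q$, initial states $Q_0\subseteq Q$, transition function $\delta:Q\times\Sigma\to 2^Q$ and an acceptance condition $\alpha$ (Büchi, co-Büchi, parity, Rabin or Streett). A run on $w=a_1a_2\cdots$ is $r_0r_1\cdots$ with $r_0\in Q_0$ and $r_{i+1}\in\delta(r_i,a_{i+1})$; it is accepting if the set $\inf(r)$ of states visited infinitely often satisfies $\alpha$; $L(\mathcal{A})$ is the set of words with an accepting run. $\mathcal{A}^q$ is $\mathcal{A}$ with initial state set $\{q\}$. $\mathcal{A}$ is good for games (GFG) if there is a strategy $g:\Sigma^*\to Q$ such that for every $w=a_1a_2\cdots$, the sequence $g(\epsilon),g(a_1),g(a_1a_2),\ldots$ is a run of $\mathcal{A}$ on $w$ that is accepting whenever $w\in L(\mathcal{A})$; $g$ then witnesses $\mathcal{A}$'s GFGness.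 A finite-state strategy is given by a transducer $\langle\Sigma,Q,M,m_0,\rho,\tau\rangle$ with finite memory set $M$, initial memory $m_0$, update $\rho:M\times\Sigma\to M$ (extended to words by $\rho(\epsilon)=m_0$, $\rho(ua)=\rho(\rho(u),a)$) and output $\tau:M\to Q$, generating $g(u)=\tau(\rho(u))$. A memory $m$ with $\tau(m)=q$ is a memory of $q$. $\mathcal{A}_g=\langle\Sigma,M,m_0,\rho,\alpha_g\rangle$ is the deterministic automaton where $\alpha_g$ is obtained from $\alpha$ by replacing every set $F\subseteq Q$ occurring in $\alpha$ by $\{m\mid\tau(m)\in F\}$ (for parity, $m$ gets the priority of $\tau(m)$); $\mathcal{A}_g^m$ is $\mathcal{A}_g$ with initial memory $m$. *)

theory Defs
  imports Main
begin

datatype 'q acc =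
    Buchi "'q set"
  | CoBuchi "'q set"
  | Parity "'q \<Rightarrow> nat"
  | Rabin "('q set \<times> 'q set) list"
  | Streett "('q set \<times> 'q set) list"

definition inf_set :: "(nat \<Rightarrow> 'q) \<Rightarrow> 'q set" where
  "inf_set r = {q. \<exists>\<^sub>\<infinity> i. r i = q}"

fun acc_sat :: "'q acc \<Rightarrow> 'q set \<Rightarrow> bool" where
  "acc_sat (Buchi F) S = (S \<inter> F \<noteq> {})"
| "acc_sat (CoBuchi F) S = (S \<inter> F = {})"
| "acc_sat (Parity p) S = even (Min (p ` S))"
| "acc_sat (Rabin prs) S = (\<exists>(E,F)\<in>set prs. S \<inter> E = {} \<and> S \<inter> F \<noteq> {})"
| "acc_sat (Streett prs) S = (\<forall>(E,F)\<in>set prs. S \<inter> E \<noteq> {} \<longrightarrow> S \<inter> F \<noteq> {})"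

(* Automaton over alphabet type 'a (finite) with state type 'q (finite, Q = UNIV) *)
record ('a, 'q) automaton =
  init :: "'q set"
  trans :: "'q \<Rightarrow> 'a \<Rightarrow> 'q set"
  acc :: "'q acc"

(* w i is the letter a_{i+1} *)
definition is_run :: "('a, 'q) automaton \<Rightarrow> (nat \<Rightarrow> 'a) \<Rightarrow> (nat \<Rightarrow> 'q) \<Rightarrow> bool" where
  "is_run A w r \<longleftrightarrow> r 0 \<in> init A \<and> (\<forall>i. r (Suc i) \<in> trans A (r i) (w i))"

definition accepting :: "('a, 'q) automaton \<Rightarrow> (nat \<Rightarrow> 'q) \<Rightarrow> bool" where
  "accepting A r \<longleftrightarrow> acc_sat (acc A) (inf_set r)"

definition lang :: "('a, 'q) automaton \<Rightarrow> (nat \<Rightarrow> 'a) set" where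
  "lang A = {w. \<exists>r. is_run A w r \<and> accepting A r}"

definition from_state :: "('a, 'q) automaton \<Rightarrow> 'q \<Rightarrow> ('a, 'q) automaton" where
  "from_state A q = A\<lparr>init := {q}\<rparr>"

definition witnesses_gfg :: "('a, 'q) automaton \<Rightarrow> ('a list \<Rightarrow> 'q) \<Rightarrow> bool" where
  "witnesses_gfg A g \<longleftrightarrow>
     (\<forall>w. is_run A w (\<lambda>i. g (map w [0..<i])) \<and>
          (w \<in> lang A \<longrightarrow> accepting A (\<lambda>i. g (map w [0..<i]))))"

definition GFG :: "('a, 'q) automaton \<Rightarrow> bool" where
  "GFG A \<longleftrightarrow> (\<exists>g. witnesses_gfg A g)"

record ('a, 'q, 'm) transducer =
  m0 :: 'm
  rho :: "'m \<Rightarrow> 'a \<Rightarrow> 'm"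
  tau :: "'m \<Rightarrow> 'q"

definition rho_word :: "('a, 'q, 'm) transducer \<Rightarrow> 'a list \<Rightarrow> 'm" where
  "rho_word T u = foldl (rho T) (m0 T) u"

definition strat :: "('a, 'q, 'm) transducer \<Rightarrow> 'a list \<Rightarrow> 'q" where
  "strat T u = tau T (rho_word T u)"

fun acc_pull :: "('m \<Rightarrow> 'q) \<Rightarrow> 'q acc \<Rightarrow> 'm acc" where
  "acc_pull t (Buchi F) = Buchi {m. t m \<in> F}"
| "acc_pull t (CoBuchi F) = CoBuchi {m. t m \<in> F}"
| "acc_pull t (Parity p) = Parity (\<lambda>m. p (t m))"
| "acc_pull t (Rabin prs) = Rabin (map (\<lambda>(E,F). ({m. t m \<in> E}, {m. t m \<in> F})) prs)"
| "acc_pull t (Streett prs) = Streett (map (\<lambda>(E,F). ({m. t m \<in> E}, {m. t m \<in> F})) prs)"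

definition Ag :: "('a, 'q) automaton \<Rightarrow> ('a, 'q, 'm) transducer \<Rightarrow> ('a, 'm) automaton" where
  "Ag A T = \<lparr>init = {m0 T}, trans = (\<lambda>m a. {rho T m a}), acc = acc_pull (tau T) (acc A)\<rparr>"

definition reachable_mem :: "('a, 'q, 'm) transducer \<Rightarrow> 'm \<Rightarrow> bool" where
  "reachable_mem T m \<longleftrightarrow> (\<exists>u. rho_word T u = m)"

end

theory Submission
  imports Defs "HOL-Library.Infinite_Set"
begin

lemma inf_set_shift: "inf_set (\<lambda>i. r (i + k)) = inf_set r"
proof -
  have "(\<exists>\<^sub>\<infinity> i. r (i + k) = q) = (\<exists>\<^sub>\<infinity> i. r i = q)" for q
  proof
    assume "\<exists>\<^sub>\<infinity> i. r (i + k) = q"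
    then show "\<exists>\<^sub>\<infinity> i. r i = q" unfolding INFM_nat
      by (metis add.commute trans_less_add2)
  next
    assume h: "\<exists>\<^sub>\<infinity> i. r i = q"
    show "\<exists>\<^sub>\<infinity> i. r (i + k) = q" unfolding INFM_nat
    proof
      fix m
      from h obtain n where "n > m + k" "r n = q" unfolding INFM_nat by blast
      then show "\<exists>n>m. r (n + k) = q"
        by (intro exI[of _ "n - k"]) auto
    qed
  qed
  then show ?thesis unfolding inf_set_def by simp
qed

lemma inf_set_comp:
  fixes r :: "nat \<Rightarrow> 'm::finite"
  shows "inf_set (\<lambda>i. t (r i)) = t ` inf_set r"
proof
  show "t ` inf_set r \<subseteq> inf_set (\<lambda>i. t (r i))"
    unfolding inf_set_def by (auto elim: INFM_mono)
next
  show "inf_set (\<lambda>i. t (r i)) \<subseteq> t ` inf_set r"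
  proof
    fix q assume "q \<in> inf_set (\<lambda>i. t (r i))"
    then have inf: "infinite {i. t (r i) = q}"
      unfolding inf_set_def by (simp add: Inf_many_def)
    have eq: "{i. t (r i) = q} = (\<Union>m\<in>{m. t m = q}. {i. r i = m})" by auto
    have "\<not> (\<forall>m\<in>{m. t m = q}. finite {i. r i = m})"
      using inf unfolding eq by (simp add: finite_UN)
    then obtain m where "t m = q" "infinite {i. r i = m}" by blast
    then show "q \<in> t ` inf_set r"
      unfolding inf_set_def by (auto simp: Inf_many_def)
  qed
qed

lemma pull_empty: "(S \<inter> {m. t m \<in> E} = {}) = (t ` S \<inter> E = {})" by auto

lemma acc_pull_sat: "acc_sat (acc_pull t c) S = acc_sat c (t ` S)"
  by (cases c; simp add: image_comp o_def pull_empty split_def)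

lemma Ag_run:
  "is_run (from_state (Ag A T) m) w r \<longleftrightarrow> r = (\<lambda>i. foldl (rho T) m (map w [0..<i]))"
proof
  assume h: "is_run (from_state (Ag A T) m) w r"
  show "r = (\<lambda>i. foldl (rho T) m (map w [0..<i]))"
  proof
    fix i show "r i = foldl (rho T) m (map w [0..<i])"
      using h by (induction i) (auto simp: is_run_def from_state_def Ag_def)
  qed
qed (auto simp: is_run_def from_state_def Ag_def)

lemma lang_Ag:
  fixes T :: "('a, 'q, 'm::finite) transducer"
  shows "lang (from_state (Ag A T) m) =
    {w. acc_sat (acc A) (inf_set (\<lambda>i. tau T (foldl (rho T) m (map w [0..<i]))))}"
  unfolding lang_def Ag_run accepting_def
  by (simp add: from_state_def Ag_def acc_pull_sat
     inf_set_comp[of "tau T" "\<lambda>i. foldl (rho T) m (map w [0..<i])" for w])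

definition cat :: "'a list \<Rightarrow> (nat \<Rightarrow> 'a) \<Rightarrow> nat \<Rightarrow> 'a" where
  "cat u w = (\<lambda>i. if i < length u then u ! i else w (i - length u))"

lemma map_cat: "map (cat u w) [0..<length u + i] = u @ map w [0..<i]"
proof (induction i)
  case 0
  show ?case by (rule nth_equalityI) (auto simp: cat_def)
next
  case (Suc i)
  then show ?case by (simp add: cat_def)
qed

lemma strat_cat:
  "strat T (map (cat u w) [0..<i + length u]) = tau T (foldl (rho T) (rho_word T u) (map w [0..<i]))"
  unfolding add.commute[of i] map_cat by (simp add: strat_def rho_word_def)

lemma part1:
  fixes A :: "('a, 'q) automaton" and T :: "('a, 'q, 'm::finite) transducer"
  assumes W: "witnesses_gfg A (strat T)" and m: "rho_word T u = m" and q: "tau T m = q"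
  shows "lang (from_state (Ag A T) m) = lang (from_state A q)"
proof
  let ?R = "\<lambda>w i. tau T (foldl (rho T) m (map w [0..<i]))"
  have run: "is_run (from_state A q) w (?R w)" for w
  proof -
    have "is_run A (cat u w) (\<lambda>i. strat T (map (cat u w) [0..<i]))"
      using W unfolding witnesses_gfg_def by blast
    then have "strat T (map (cat u w) [0..<Suc (i + length u)]) \<in>
       trans A (strat T (map (cat u w) [0..<i + length u])) (cat u w (i + length u))" for i
      unfolding is_run_def by blast
    moreover have "cat u w (i + length u) = w i" for i by (simp add: cat_def)
    ultimately have "?R w (Suc i) \<in> trans A (?R w i) (w i)" for i
      using strat_cat[of T u w "Suc i"] strat_cat[of T u w i] m
      by (metis add_Suc)
    then show ?thesis using q by (simp add: is_run_def from_state_def)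
  qed
  show "lang (from_state (Ag A T) m) \<subseteq> lang (from_state A q)"
  proof
    fix w assume "w \<in> lang (from_state (Ag A T) m)"
    then have "acc_sat (acc A) (inf_set (?R w))" by (simp add: lang_Ag)
    then show "w \<in> lang (from_state A q)"
      using run[of w] unfolding lang_def accepting_def by (auto simp: from_state_def)
  qed
  show "lang (from_state A q) \<subseteq> lang (from_state (Ag A T) m)"
  proof
    fix w assume "w \<in> lang (from_state A q)"
    then obtain s where s: "is_run (from_state A q) w s" "accepting (from_state A q) s"
      unfolding lang_def by blast
    let ?w = "cat u w"
    let ?g = "\<lambda>i. strat T (map ?w [0..<i])"
    have grun: "is_run A ?w ?g" using W unfolding witnesses_gfg_def by blast
    have gu: "?g (length u) = q"
      using strat_cat[of T u w 0] m q by simp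
    have s0: "s 0 = q" using s(1) by (simp add: is_run_def from_state_def)
    define s' where "s' = (\<lambda>i. if i \<le> length u then ?g i else s (i - length u))"
    have shift: "s' (i + length u) = s i" for i
      using gu s0 by (cases i) (auto simp: s'_def)
    have "is_run A ?w s'"
      unfolding is_run_def
    proof (intro conjI allI)
      show "s' 0 \<in> init A" using grun by (simp add: s'_def is_run_def)
      fix i
      show "s' (Suc i) \<in> trans A (s' i) (?w i)"
      proof (cases "Suc i \<le> length u")
        case True
        then show ?thesis using grun by (simp add: s'_def is_run_def)
      next
        case False
        then obtain j where j: "i = j + length u" by (metis add.commute le_Suc_ex not_less_eq_eq)
        have "s (Suc j) \<in> trans A (s j) (w j)"
          using s(1) by (simp add: is_run_def from_state_def)
        then show ?thesis using shift[of j] shift[of "Suc j"] j by (simp add: cat_def)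
      qed
    qed
    moreover have "accepting A s'"
      using s(2) inf_set_shift[of s' "length u"] shift
      by (simp add: accepting_def from_state_def)
    ultimately have "?w \<in> lang A" unfolding lang_def by blast
    then have "accepting A ?g" using W unfolding witnesses_gfg_def by blast
    then have "acc_sat (acc A) (inf_set (\<lambda>i. ?g (i + length u)))"
      using inf_set_shift[of ?g "length u"] by (simp add: accepting_def)
    then show "w \<in> lang (from_state (Ag A T) m)"
      using strat_cat[of T u w] m by (simp add: lang_Ag)
  qed
qed

theorem lemma2:
  fixes A :: "('a::finite, 'q::finite) automaton"
    and T :: "('a, 'q, 'm::finite) transducer"
  assumes "GFG A"
    and "witnesses_gfg A (strat T)"
  shows "(\<forall>q m. tau T m = q \<and> reachable_mem T m \<longrightarrow>
            lang (from_state (Ag A T) m) = lang (from_state A q))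
       \<and> (\<forall>m m'. reachable_mem T m \<and> reachable_mem T m' \<and> tau T m = tau T m' \<longrightarrow>
            lang (from_state (Ag A T) m) = lang (from_state (Ag A T) m'))"
  using part1[OF assms(2)] unfolding reachable_mem_def by metis

end
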